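(* For binary matrices $P\in\{0,1\}^{k\times\ell}$ and $M\in\{0,1\}^{m\times n}$ the following are equivalent: 1. $P$ is an interval minor of $M$; 2. $M$ has a partition containing $P$; 3. $P$ has an embedding into $M$; 4. $P$ has a partial embedding into $M$.
   Context: Rows are numbered top to bottom, columns left to right; $(i,j)$ is the entry in row $i$, column $j$, a 1-entry if it equals 1. For integers, $[a,b]=\{a,\dots,b\}$, $(a,b]=[a+1,b]$, $[n]=[1,n]$. A row contraction in $M$ replaces two adjacent rows $r,r+1$ by a single row whose entry in column $j$ is $\max\{M(r,j),M(r+1,j)\}$; column contraction is analogous. A matrix $M'$ dominates $M$ if they have the same dimensions and every 1-entry of $M$ is a 1-entry of $M'$. $P$ is an interval minor of $M$ if $M$ can be transformed by a sequence of row and column contractions into a $k\times\ell$ matrix dominating $P$. A partition of $M$ containing $P$ is a choice of integers $0\le r_0<r_1<\dots<r_k\le m$ and $0\le c_0<c_1<\dots<c_\ell\le n$ such that for every 1-entry $(i,j)$ of $P$ the submatrix of $M$ on rows $(r_{i-1},r_i]$ and columns $(c_{j-1},c_j]$ has a 1-entry. An embedding of $P$ into $M$ is a map $\phi:[k]\times[\ell]\to[m]\times[n]$ sending 1-entries of $P$ to 1-entries of $M$ such that for any entries $e_1=(i_1,j_1)$, $e_2=(i_2,j_2)$ with $\phi(e_1)=(i_1^*,j_1^* )$, $\phi(e_2)=(i_2^*,j_2^* )$: $i_1<i_2$ implies $i_1^*<i_2^*$, and $j_1<j_2$ implies $j_1^*<j_2^*$. For a nonempty $S\subseteq[k]\times[\ell]$,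 a partial embedding is a map $\psi:S\to[m]\times[n]$ such that: every 1-entry $e$ of $P$ lies in $S$ and $\psi(e)$ is a 1-entry of $M$; each $e=(i,j)\in S$ is mapped to $(i^*,j^* )$ with $i\le i^*$, $j\le j^*$, $k-i\le m-i^*$, $\ell-j\le n-j^*$; and for $e_1=(i_1,j_1)$, $e_2=(i_2,j_2)$ in $S$ with images $(i_1^*,j_1^* )$, $(i_2^*,j_2^* )$: if $i_1<i_2$ then $i_2-i_1\le i_2^*-i_1^*$, and if $j_1<j_2$ then $j_2-j_1\le j_2^*-j_1^*$. *)

theory Defs
  imports Main
begin

text \<open>A binary matrix with r rows and c columns is represented by its dimensions
together with a predicate A :: nat \<Rightarrow> nat \<Rightarrow> bool; A i j holds iff entry (i,j)
(1-based, 1 \<le> i \<le> r, 1 \<le> j \<le> c) is a 1-entry. Values outside the index range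
are irrelevant.\<close>

type_synonym bmat = "nat \<Rightarrow> nat \<Rightarrow> bool"

definition row_contract :: "nat \<Rightarrow> bmat \<Rightarrow> bmat" where
  "row_contract r A = (\<lambda>i j. if i < r then A i j
                              else if i = r then (A r j \<or> A (Suc r) j)
                              else A (Suc i) j)"

definition col_contract :: "nat \<Rightarrow> bmat \<Rightarrow> bmat" where
  "col_contract c A = (\<lambda>i j. if j < c then A i j
                              else if j = c then (A i c \<or> A i (Suc c))
                              else A i (Suc j))"

inductive contract_step :: "nat \<times> nat \<times> bmat \<Rightarrow> nat \<times> nat \<times> bmat \<Rightarrow> bool" where
  row: "1 \<le> r \<Longrightarrow> r < m \<Longrightarrow> contract_step (m, n, A) (m - 1, n, row_contract r A)"
| col: "1 \<le> c \<Longrightarrow> c < n \<Longrightarrow> contract_step (m, n, A) (m, n - 1, col_contract c A)"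

definition dominates :: "nat \<Rightarrow> nat \<Rightarrow> bmat \<Rightarrow> bmat \<Rightarrow> bool" where
  "dominates k l A' A \<longleftrightarrow> (\<forall>i\<in>{1..k}. \<forall>j\<in>{1..l}. A i j \<longrightarrow> A' i j)"

definition interval_minor :: "bmat \<Rightarrow> nat \<Rightarrow> nat \<Rightarrow> bmat \<Rightarrow> nat \<Rightarrow> nat \<Rightarrow> bool" where
  "interval_minor P k l M m n \<longleftrightarrow>
     (\<exists>M'. contract_step\<^sup>*\<^sup>* (m, n, M) (k, l, M') \<and> dominates k l M' P)"

definition has_partition_containing :: "bmat \<Rightarrow> nat \<Rightarrow> nat \<Rightarrow> bmat \<Rightarrow> nat \<Rightarrow> nat \<Rightarrow> bool" where
  "has_partition_containing P k l M m n \<longleftrightarrow>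
     (\<exists>r c :: nat \<Rightarrow> nat.
        (\<forall>i<k. r i < r (Suc i)) \<and> r k \<le> m \<and>
        (\<forall>j<l. c j < c (Suc j)) \<and> c l \<le> n \<and>
        (\<forall>i\<in>{1..k}. \<forall>j\<in>{1..l}. P i j \<longrightarrow>
            (\<exists>a\<in>{r (i - 1)<..r i}. \<exists>b\<in>{c (j - 1)<..c j}. M a b)))"

definition is_embedding ::
  "(nat \<times> nat \<Rightarrow> nat \<times> nat) \<Rightarrow> bmat \<Rightarrow> nat \<Rightarrow> nat \<Rightarrow> bmat \<Rightarrow> nat \<Rightarrow> nat \<Rightarrow> bool" where
  "is_embedding \<phi> P k l M m n \<longleftrightarrow>
     (\<forall>e\<in>{1..k} \<times> {1..l}. \<phi> e \<in> {1..m} \<times> {1..n}) \<and>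
     (\<forall>e\<in>{1..k} \<times> {1..l}. P (fst e) (snd e) \<longrightarrow> M (fst (\<phi> e)) (snd (\<phi> e))) \<and>
     (\<forall>e1\<in>{1..k} \<times> {1..l}. \<forall>e2\<in>{1..k} \<times> {1..l}.
        (fst e1 < fst e2 \<longrightarrow> fst (\<phi> e1) < fst (\<phi> e2)) \<and>
        (snd e1 < snd e2 \<longrightarrow> snd (\<phi> e1) < snd (\<phi> e2)))"

definition has_embedding :: "bmat \<Rightarrow> nat \<Rightarrow> nat \<Rightarrow> bmat \<Rightarrow> nat \<Rightarrow> nat \<Rightarrow> bool" where
  "has_embedding P k l M m n \<longleftrightarrow> (\<exists>\<phi>. is_embedding \<phi> P k l M m n)"

definition is_partial_embedding ::
  "(nat \<times> nat) set \<Rightarrow> (nat \<times> nat \<Rightarrow> nat \<times> nat) \<Rightarrow> bmat \<Rightarrow> nat \<Rightarrow> nat \<Rightarrow> bmat \<Rightarrow> nat \<Rightarrow> nat \<Rightarrow> bool" where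
  "is_partial_embedding S \<psi> P k l M m n \<longleftrightarrow>
     S \<noteq> {} \<and> S \<subseteq> {1..k} \<times> {1..l} \<and>
     (\<forall>e\<in>S. \<psi> e \<in> {1..m} \<times> {1..n}) \<and>
     (\<forall>e\<in>{1..k} \<times> {1..l}. P (fst e) (snd e) \<longrightarrow> e \<in> S \<and> M (fst (\<psi> e)) (snd (\<psi> e))) \<and>
     (\<forall>e\<in>S. fst e \<le> fst (\<psi> e) \<and> snd e \<le> snd (\<psi> e) \<and>
             int k - int (fst e) \<le> int m - int (fst (\<psi> e)) \<and>
             int l - int (snd e) \<le> int n - int (snd (\<psi> e))) \<and>
     (\<forall>e1\<in>S. \<forall>e2\<in>S.
        (fst e1 < fst e2 \<longrightarrow>
           int (fst e2) - int (fst e1) \<le> int (fst (\<psi> e2)) - int (fst (\<psi> e1))) \<and>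
        (snd e1 < snd e2 \<longrightarrow>
           int (snd e2) - int (snd e1) \<le> int (snd (\<psi> e2)) - int (snd (\<psi> e1))))"

definition has_partial_embedding :: "bmat \<Rightarrow> nat \<Rightarrow> nat \<Rightarrow> bmat \<Rightarrow> nat \<Rightarrow> nat \<Rightarrow> bool" where
  "has_partial_embedding P k l M m n \<longleftrightarrow> (\<exists>S \<psi>. is_partial_embedding S \<psi> P k l M m n)"

end

theory Submission
  imports Defs
begin


lemma strict_mono_le:
  assumes "\<forall>x<k. (r::nat\<Rightarrow>nat) x < r (Suc x)" "i \<le> j" "j \<le> k"
  shows "r i \<le> r j"
  using assms(2,3)
proof (induction j)
  case 0 then show ?case by simp
next
  case (Suc j)
  show ?case
  proof (cases "i = Suc j")
    case True then show ?thesis by simp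
  next
    case False
    then have "r i \<le> r j" using Suc by simp
    moreover have "r j < r (Suc j)" using assms(1) Suc.prems by simp
    ultimately show ?thesis by simp
  qed
qed

lemma strict_mono_lt:
  assumes "\<forall>x<k. (r::nat\<Rightarrow>nat) x < r (Suc x)" "i < j" "j \<le> k"
  shows "r i < r j"
proof -
  have "r i < r (Suc i)" using assms by simp
  also have "r (Suc i) \<le> r j" using strict_mono_le[OF assms(1)] assms by simp
  finally show ?thesis .
qed

lemma split1d:
  fixes r :: "nat \<Rightarrow> nat" and Q :: "nat \<Rightarrow> bool"
  assumes st: "\<forall>x<k. r x < r (Suc x)" and i: "1 \<le> i" "i \<le> k" and big: "r (i-1) + 2 \<le> r i"
    and x: "1 \<le> x" "x \<le> k"
    and t_def: "t = Suc (r (i-1))"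
    and r'_def: "r' = (\<lambda>y. if y < i then r y else r y - 1)"
  shows "(\<exists>a\<in>{r'(x-1)<..r' x}. (if a < t then Q a else if a = t then Q t \<or> Q (Suc t) else Q (Suc a)))
         = (\<exists>a\<in>{r(x-1)<..r x}. Q a)"
proof -
  define F where "F a = (if a < t then Q a else if a = t then Q t \<or> Q (Suc t) else Q (Suc a))" for a
  have F1: "a < t \<Longrightarrow> F a = Q a" for a unfolding F_def by simp
  have F2: "F t = (Q t \<or> Q (Suc t))" unfolding F_def by simp
  have F3: "t < a \<Longrightarrow> F a = Q (Suc a)" for a unfolding F_def by simp
  have goal: "(\<exists>a\<in>{r'(x-1)<..r' x}. F a) = (\<exists>a\<in>{r(x-1)<..r x}. Q a)"
  proof (cases "x < i")
    case True
    have e1: "r' (x-1) = r (x-1)" "r' x = r x" using True unfolding r'_def by auto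
    have "r x \<le> r (i-1)" using strict_mono_le[OF st] True i by simp
    then have "r x < t" unfolding t_def by simp
    then show ?thesis unfolding e1 by (intro bex_cong refl) (simp add: F1)
  next
    case False
    show ?thesis
    proof (cases "x = i")
      case True
      have r1: "r' (x-1) = r (i-1)" "r' x = r i - 1" using True i unfolding r'_def by simp_all
      have tin: "t \<in> {r(x-1)<..r x}" "Suc t \<in> {r(x-1)<..r x}" using big True unfolding t_def by simp_all
      show ?thesis
      proof
        assume "\<exists>a\<in>{r'(x-1)<..r' x}. F a"
        then obtain a where a: "a \<in> {r'(x-1)<..r' x}" and q: "F a" by blast
        have ta: "t \<le> a" using a r1 unfolding t_def by simp
        show "\<exists>a\<in>{r(x-1)<..r x}. Q a"
        proof (cases "a = t")
          case True
          then have "Q t \<or> Q (Suc t)" using q F2 by simp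
          then show ?thesis using tin by blast
        next
          case False
          then have "Q (Suc a)" using q F3 ta by simp
          moreover have "Suc a \<in> {r(i-1)<..r i}" using a r1 big ta unfolding t_def greaterThanAtMost_iff by linarith
          ultimately show ?thesis using \<open>x = i\<close> by blast
        qed
      next
        assume "\<exists>a\<in>{r(x-1)<..r x}. Q a"
        then obtain a where a: "a \<in> {r(x-1)<..r x}" and q: "Q a" by blast
        have tin': "t \<in> {r'(x-1)<..r' x}" using r1 big unfolding t_def by simp
        show "\<exists>a\<in>{r'(x-1)<..r' x}. F a"
        proof (cases "a \<le> Suc t")
          case True
          then have "a = t \<or> a = Suc t" using a \<open>x = i\<close> unfolding t_def by auto
          then have "F t" using q F2 by blast
          then show ?thesis using tin' by blast
        next
          case False
          then have "F (a - 1)" using F3[of "a - 1"] q by simp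
          moreover have "a - 1 \<in> {r'(x-1)<..r' x}" using r1 a False \<open>x = i\<close> unfolding t_def by (simp; arith)
          ultimately show ?thesis by blast
        qed
      qed
    next
      case False
      then have xi: "i < x" using \<open>\<not> x < i\<close> by simp
      have ge: "r i \<le> r (x-1)" using strict_mono_le[OF st] xi x by simp
      have lt: "r (x-1) < r x"
      proof -
        obtain u where u: "x = Suc u" using x by (cases x) auto
        have "r u < r (Suc u)" using st x u by simp
        then show ?thesis using u by simp
      qed
      have r1: "r' (x-1) = r (x-1) - 1" "r' x = r x - 1" using xi unfolding r'_def by auto
      have tl: "t < r i" using big unfolding t_def by simp
      show ?thesis
      proof
        assume "\<exists>a\<in>{r'(x-1)<..r' x}. F a"
        then obtain a where a: "a \<in> {r'(x-1)<..r' x}" and q: "F a" by blast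
        have "t < a" using a r1 ge tl by (simp; arith)
        then have "Q (Suc a)" using q F3 by simp
        moreover have "Suc a \<in> {r(x-1)<..r x}" using a r1 lt ge tl by (simp; arith)
        ultimately show "\<exists>a\<in>{r(x-1)<..r x}. Q a" by blast
      next
        assume "\<exists>a\<in>{r(x-1)<..r x}. Q a"
        then obtain a where a: "a \<in> {r(x-1)<..r x}" and q: "Q a" by blast
        have "t < a - 1" using a ge tl by (simp; arith)
        then have "F (a - 1)" using F3[of "a - 1"] q by simp
        moreover have "a - 1 \<in> {r'(x-1)<..r' x}" using a r1 ge tl by (simp; arith)
        ultimately show "\<exists>a\<in>{r'(x-1)<..r' x}. F a" by blast
      qed
    qed
  qed
  then show ?thesis unfolding F_def .
qed

lemma merge1d:
  fixes r :: "nat \<Rightarrow> nat" and Q :: "nat \<Rightarrow> bool"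
  assumes st: "\<forall>x<k. r x < r (Suc x)" and t: "1 \<le> t" "t < k" and x: "1 \<le> x" "x < k"
    and r'_def: "r' = (\<lambda>y. if y < t then r y else r (Suc y))"
  shows "(if x < t then (\<exists>a\<in>{r(x-1)<..r x}. Q a)
          else if x = t then (\<exists>a\<in>{r(t-1)<..r t}. Q a) \<or> (\<exists>a\<in>{r(Suc t-1)<..r (Suc t)}. Q a)
          else (\<exists>a\<in>{r(Suc x-1)<..r (Suc x)}. Q a))
       = (\<exists>a\<in>{r'(x-1)<..r' x}. Q a)"
proof -
  consider "x < t" | "x = t" | "x > t" by linarith
  then show ?thesis
  proof cases
    case 1
    have e: "r' (x-1) = r (x-1)" "r' x = r x" using 1 unfolding r'_def by auto
    show ?thesis unfolding e using 1 by simp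
  next
    case 2
    have e: "r' (x-1) = r (t-1)" "r' x = r (Suc t)" using 2 t unfolding r'_def by auto
    have l1: "r (t-1) < r t"
    proof -
      obtain u where u: "t = Suc u" using t by (cases t) auto
      have "r u < r (Suc u)" using st t u by simp
      then show ?thesis using u by simp
    qed
    have l2: "r t < r (Suc t)" using st t by simp
    have sp: "{r(t-1)<..r (Suc t)} = {r(t-1)<..r t} \<union> {r t<..r (Suc t)}" using l1 l2 by auto
    show ?thesis unfolding e sp bex_Un using 2 by simp
  next
    case 3
    have e: "r' (x-1) = r x" "r' x = r (Suc x)" using 3 unfolding r'_def by auto
    show ?thesis unfolding e using 3 by simp
  qed
qed



definition blk :: "(nat\<Rightarrow>nat) \<Rightarrow> (nat\<Rightarrow>nat) \<Rightarrow> bmat \<Rightarrow> bmat" where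
 "blk r c M = (\<lambda>i j. \<exists>a\<in>{r (i-1)<..r i}. \<exists>b\<in>{c (j-1)<..c j}. M a b)"

lemma id_of_small:
  assumes st: "\<forall>x<k. (r::nat\<Rightarrow>nat) x < r (Suc x)" and r0: "r 0 = 0"
    and sm: "\<not> (\<exists>i\<in>{1..k}. r (i-1) + 2 \<le> r i)" and x: "x \<le> k"
  shows "r x = x"
  using x
proof (induction x)
  case 0 then show ?case using r0 by simp
next
  case (Suc x)
  have "r x < r (Suc x)" using st Suc.prems by simp
  moreover have "\<not> r x + 2 \<le> r (Suc x)"
  proof
    assume "r x + 2 \<le> r (Suc x)"
    then have "r (Suc x - 1) + 2 \<le> r (Suc x)" by simp
    moreover have "Suc x \<in> {1..k}" using Suc.prems by simp
    ultimately show False using sm by blast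
  qed
  ultimately show ?case using Suc by simp
qed

lemma shift_strict:
  assumes st: "\<forall>x<k. (r::nat\<Rightarrow>nat) x < r (Suc x)" and i: "1 \<le> i" "i \<le> k" "r (i-1) + 2 \<le> r i"
  shows "\<forall>x<k. (\<lambda>y. if y < i then r y else r y - 1) x < (\<lambda>y. if y < i then r y else r y - 1) (Suc x)"
proof (intro allI impI)
  fix x assume x: "x < k"
  consider "Suc x < i" | "Suc x = i" | "x \<ge> i" by linarith
  then show "(\<lambda>y. if y < i then r y else r y - 1) x < (\<lambda>y. if y < i then r y else r y - 1) (Suc x)"
  proof cases
    case 1 then show ?thesis using st x by simp
  next
    case 2 then show ?thesis using i by auto
  next
    case 3
    have "r i \<le> r x" using strict_mono_le[OF st 3] x by simp
    moreover have "r x < r (Suc x)" using st x by simp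
    ultimately show ?thesis using 3 i by auto
  qed
qed

lemma row_bex:
  "(\<exists>b\<in>C. row_contract t M a b) =
   (if a < t then (\<exists>b\<in>C. M a b) else if a = t then (\<exists>b\<in>C. M t b) \<or> (\<exists>b\<in>C. M (Suc t) b) else (\<exists>b\<in>C. M (Suc a) b))"
  by (auto simp: row_contract_def)

lemma col_bex:
  "(\<exists>a\<in>C. col_contract t M a b) =
   (if b < t then (\<exists>a\<in>C. M a b) else if b = t then (\<exists>a\<in>C. M a t) \<or> (\<exists>a\<in>C. M a (Suc t)) else (\<exists>a\<in>C. M a (Suc b)))"
  by (auto simp: col_contract_def)

lemma PI:
  "\<forall>x<k. r x < r (Suc x) \<Longrightarrow> r 0 = 0 \<Longrightarrow> r k = m \<Longrightarrow>
   \<forall>y<l. c y < c (Suc y) \<Longrightarrow> c 0 = 0 \<Longrightarrow> c l = n \<Longrightarrow>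
   \<exists>M'. contract_step\<^sup>*\<^sup>* (m,n,M) (k,l,M') \<and> (\<forall>i\<in>{1..k}. \<forall>j\<in>{1..l}. M' i j = blk r c M i j)"
proof (induction "m+n" arbitrary: m n M r c rule: less_induct)
  case less
  show ?case
  proof (cases "\<exists>i\<in>{1..k}. r (i-1) + 2 \<le> r i")
    case True
    then obtain i where i: "1 \<le> i" "i \<le> k" "r (i-1) + 2 \<le> r i" by auto
    define t where "t = Suc (r (i-1))"
    define r' where "r' = (\<lambda>y. if y < i then r y else r y - 1)"
    have "r i \<le> r k" using strict_mono_le[OF less.prems(1)] i by simp
    then have tm: "t < m" using i less.prems(3) unfolding t_def by simp
    have step: "contract_step (m,n,M) (m-1, n, row_contract t M)"
      using contract_step.row[of t m n M] tm by (simp add: t_def)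
    have st': "\<forall>x<k. r' x < r' (Suc x)" unfolding r'_def by (rule shift_strict[OF less.prems(1) i])
    have r'0: "r' 0 = 0" using i less.prems(2) unfolding r'_def by simp
    have r'k: "r' k = m - 1" using i less.prems(3) unfolding r'_def by simp
    obtain M' where M': "contract_step\<^sup>*\<^sup>* (m-1,n,row_contract t M) (k,l,M')"
       "\<forall>x\<in>{1..k}. \<forall>j\<in>{1..l}. M' x j = blk r' c (row_contract t M) x j"
      using less.hyps[of "m-1" n r' c "row_contract t M", OF _ st' r'0 r'k less.prems(4-6)] tm by auto
    have eq: "blk r' c (row_contract t M) x j = blk r c M x j" if x: "1 \<le> x" "x \<le> k" for x j
      unfolding blk_def row_bex
      by (rule split1d[OF less.prems(1) i x t_def r'_def])
    show ?thesis
      using converse_rtranclp_into_rtranclp[OF step M'(1)] M'(2) eq by (intro exI[of _ M']) auto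
  next
    case Fr: False
    show ?thesis
    proof (cases "\<exists>i\<in>{1..l}. c (i-1) + 2 \<le> c i")
      case True
      then obtain i where i: "1 \<le> i" "i \<le> l" "c (i-1) + 2 \<le> c i" by auto
      define t where "t = Suc (c (i-1))"
      define c' where "c' = (\<lambda>y. if y < i then c y else c y - 1)"
      have "c i \<le> c l" using strict_mono_le[OF less.prems(4)] i by simp
      then have tm: "t < n" using i less.prems(6) unfolding t_def by simp
      have step: "contract_step (m,n,M) (m, n-1, col_contract t M)"
        using contract_step.col[of t n m M] tm by (simp add: t_def)
      have st': "\<forall>x<l. c' x < c' (Suc x)" unfolding c'_def by (rule shift_strict[OF less.prems(4) i])
      have c'0: "c' 0 = 0" using i less.prems(5) unfolding c'_def by simp
      have c'l: "c' l = n - 1" using i less.prems(6) unfolding c'_def by simp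
      obtain M' where M': "contract_step\<^sup>*\<^sup>* (m,n-1,col_contract t M) (k,l,M')"
         "\<forall>x\<in>{1..k}. \<forall>j\<in>{1..l}. M' x j = blk r c' (col_contract t M) x j"
        using less.hyps[of m "n-1" r c' "col_contract t M", OF _ less.prems(1-3) st' c'0 c'l] tm by auto
      have eq: "blk r c' (col_contract t M) x j = blk r c M x j" if j: "1 \<le> j" "j \<le> l" for x j
      proof -
        have "blk r c' (col_contract t M) x j = (\<exists>b\<in>{c' (j-1)<..c' j}. \<exists>a\<in>{r (x-1)<..r x}. col_contract t M a b)"
          unfolding blk_def by blast
        also have "\<dots> = (\<exists>b\<in>{c (j-1)<..c j}. \<exists>a\<in>{r (x-1)<..r x}. M a b)"
          unfolding col_bex
          by (rule split1d[OF less.prems(4) i j t_def c'_def])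
        also have "\<dots> = blk r c M x j" unfolding blk_def by blast
        finally show ?thesis .
      qed
      show ?thesis
        using converse_rtranclp_into_rtranclp[OF step M'(1)] M'(2) eq by (intro exI[of _ M']) auto
    next
      case False
      have rid: "r x = x" if "x \<le> k" for x using id_of_small[OF less.prems(1,2) Fr that] .
      have cid: "c x = x" if "x \<le> l" for x using id_of_small[OF less.prems(4,5) False that] .
      have mk: "m = k" using rid[of k] less.prems(3) by simp
      have nl: "n = l" using cid[of l] less.prems(6) by simp
      have "blk r c M i j = M i j" if "1 \<le> i" "i \<le> k" "1 \<le> j" "j \<le> l" for i j
      proof -
        have "{r (i-1)<..r i} = {i}" using rid[of i] rid[of "i-1"] that by auto
        moreover have "{c (j-1)<..c j} = {j}" using cid[of j] cid[of "j-1"] that by auto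
        ultimately show ?thesis unfolding blk_def by simp
      qed
      then show ?thesis using mk nl by (intro exI[of _ M]) auto
    qed
  qed
qed



lemma blk_id: "1 \<le> i \<Longrightarrow> 1 \<le> j \<Longrightarrow> blk id id M i j = M i j"
proof -
  assume "1 \<le> i" "1 \<le> j"
  then have "{i-1<..i} = {i}" "{j-1<..j} = {j}" by auto
  then show ?thesis unfolding blk_def by simp
qed

lemma merge_strict:
  assumes st: "\<forall>x<k. (r::nat\<Rightarrow>nat) x < r (Suc x)" and t: "1 \<le> t" "t < k"
  shows "\<forall>x<k-1. (\<lambda>y. if y < t then r y else r (Suc y)) x < (\<lambda>y. if y < t then r y else r (Suc y)) (Suc x)"
proof (intro allI impI)
  fix x assume x: "x < k - 1"
  consider "Suc x < t" | "Suc x = t" | "x \<ge> t" by linarith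
  then show "(\<lambda>y. if y < t then r y else r (Suc y)) x < (\<lambda>y. if y < t then r y else r (Suc y)) (Suc x)"
  proof cases
    case 1 then show ?thesis using st x by simp
  next
    case 2
    have "r x < r (Suc x)" using st x by simp
    moreover have "r (Suc x) < r (Suc (Suc x))" using st x by simp
    ultimately show ?thesis using 2 by simp
  next
    case 3 then show ?thesis using st x by simp
  qed
qed

lemma IMinv:
  assumes "contract_step\<^sup>*\<^sup>* (m,n,M) s"
  shows "case s of (k,l,M') \<Rightarrow> \<exists>r c. (\<forall>x<k. r x < r (Suc x)) \<and> r 0 = 0 \<and> r k = m \<and>
     (\<forall>y<l. c y < c (Suc y)) \<and> c 0 = 0 \<and> c l = n \<and>
     (\<forall>i\<in>{1..k}. \<forall>j\<in>{1..l}. M' i j = blk r c M i j)"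
  using assms
proof (induction rule: rtranclp_induct)
  case base
  have "\<forall>i\<in>{1..m}. \<forall>j\<in>{1..n}. M i j = blk id id M i j" using blk_id[of _ _ M] by simp
  then show ?case by (simp only: prod.case) (intro exI[of _ id] conjI; simp)
next
  case (step y z)
  from step.hyps(2) show ?case
  proof cases
    case (row t k l A)
    from step.IH obtain r c where rc: "\<forall>x<k. r x < r (Suc x)" "r 0 = 0" "r k = m"
      "\<forall>y<l. c y < c (Suc y)" "c 0 = 0" "c l = n" "\<forall>i\<in>{1..k}. \<forall>j\<in>{1..l}. A i j = blk r c M i j"
      using row(1) by auto
    define r' where "r' = (\<lambda>y. if y < t then r y else r (Suc y))"
    have st': "\<forall>x<k-1. r' x < r' (Suc x)" unfolding r'_def by (rule merge_strict[OF rc(1) row(3,4)])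
    have "r' 0 = 0" "r' (k-1) = m" using row rc unfolding r'_def by auto
    moreover have "row_contract t A x j = blk r' c M x j" if x: "1 \<le> x" "x \<le> k - 1" and j: "1 \<le> j" "j \<le> l" for x j
    proof -
      have xk: "x < k" using x row by simp
      have Ax: "A y j = blk r c M y j" if "1 \<le> y" "y \<le> k" for y using rc(7) that j by simp
      have "row_contract t A x j = (if x < t then blk r c M x j else if x = t then blk r c M t j \<or> blk r c M (Suc t) j else blk r c M (Suc x) j)"
        unfolding row_contract_def using x xk row(3,4) by (simp add: Ax)
      also have "\<dots> = blk r' c M x j"
        unfolding blk_def by (rule merge1d[OF rc(1) row(3,4) x(1) xk r'_def])
      finally show ?thesis .
    qed
    ultimately show ?thesis unfolding row(2) case_prod_conv using st' rc by (intro exI[of _ r'] exI[of _ c] conjI ballI) auto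
  next
    case (col t l k A)
    from step.IH obtain r c where rc: "\<forall>x<k. r x < r (Suc x)" "r 0 = 0" "r k = m"
      "\<forall>y<l. c y < c (Suc y)" "c 0 = 0" "c l = n" "\<forall>i\<in>{1..k}. \<forall>j\<in>{1..l}. A i j = blk r c M i j"
      using col(1) by auto
    define c' where "c' = (\<lambda>y. if y < t then c y else c (Suc y))"
    have st': "\<forall>x<l-1. c' x < c' (Suc x)" unfolding c'_def by (rule merge_strict[OF rc(4) col(3,4)])
    have "c' 0 = 0" "c' (l-1) = n" using col rc unfolding c'_def by auto
    moreover have "col_contract t A i x = blk r c' M i x" if x: "1 \<le> x" "x \<le> l - 1" and i: "1 \<le> i" "i \<le> k" for x i
    proof -
      have xk: "x < l" using x col by simp
      have bl: "blk r c M i y = (\<exists>b\<in>{c (y-1)<..c y}. \<exists>a\<in>{r (i-1)<..r i}. M a b)" for y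
        unfolding blk_def by blast
      have Ax: "A i y = blk r c M i y" if "1 \<le> y" "y \<le> l" for y using rc(7) that i by simp
      have "col_contract t A i x = (if x < t then blk r c M i x else if x = t then blk r c M i t \<or> blk r c M i (Suc t) else blk r c M i (Suc x))"
        unfolding col_contract_def using x xk col(3,4) by (simp add: Ax)
      also have "\<dots> = (\<exists>b\<in>{c' (x-1)<..c' x}. \<exists>a\<in>{r (i-1)<..r i}. M a b)"
        unfolding bl by (rule merge1d[OF rc(4) col(3,4) x(1) xk c'_def])
      also have "\<dots> = blk r c' M i x" unfolding blk_def by blast
      finally show ?thesis .
    qed
    ultimately show ?thesis unfolding col(2) case_prod_conv using st' rc by (intro exI[of _ r] exI[of _ c'] conjI ballI) auto
  qed
qed



lemma part1d:
  fixes S :: "'a set" and f g :: "'a \<Rightarrow> nat"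
  assumes fin: "finite S" and ne: "S \<noteq> {}"
   and fb: "\<forall>e\<in>S. 1 \<le> f e \<and> f e \<le> k"
   and b: "\<forall>e\<in>S. f e \<le> g e \<and> int k - int (f e) \<le> int m - int (g e)"
   and d: "\<forall>e1\<in>S. \<forall>e2\<in>S. f e1 < f e2 \<longrightarrow> int (f e2) - int (f e1) \<le> int (g e2) - int (g e1)"
  shows "\<exists>r. (\<forall>x<k. r x < r (Suc x)) \<and> r k \<le> m \<and> (\<forall>e\<in>S. r (f e - 1) < g e \<and> g e \<le> r (f e))"
proof -
  define A where "A x = insert (int m - int k + int x) ((\<lambda>e. int (g e) - int (f e) + int x) ` {e\<in>S. x < f e})" for x
  define R where "R x = Min (A x)" for x
  have finA: "finite (A x)" "A x \<noteq> {}" for x unfolding A_def using fin by auto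
  have mk: "int k \<le> int m" using ne b by fastforce
  have R0: "0 \<le> R x" for x
    unfolding R_def Min_ge_iff[OF finA] unfolding A_def using mk b by auto
  have Rle: "R x \<le> int m - int k + int x" for x
    unfolding R_def by (rule Min_le[OF finA(1)]) (simp add: A_def)
  have Rle2: "R x \<le> int (g e) - int (f e) + int x" if "e \<in> S" "x < f e" for x e
    unfolding R_def by (rule Min_le[OF finA(1)]) (use that in \<open>auto simp: A_def\<close>)
  have Rst: "R x < R (Suc x)" for x
  proof -
    have "R x + 1 \<le> R (Suc x)"
      unfolding R_def[of "Suc x"] Min_ge_iff[OF finA]
    proof
      fix a assume "a \<in> A (Suc x)"
      then consider "a = int m - int k + int (Suc x)" | e where "e \<in> S" "Suc x < f e" "a = int (g e) - int (f e) + int (Suc x)"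
        unfolding A_def by auto
      then show "R x + 1 \<le> a"
      proof cases
        case 1 then show ?thesis using Rle[of x] by simp
      next
        case 2 then show ?thesis using Rle2[of e x] by simp
      qed
    qed
    then show ?thesis by simp
  qed
  have upper: "int (g e) \<le> R (f e)" if e: "e \<in> S" for e
    unfolding R_def Min_ge_iff[OF finA]
  proof
    fix a assume "a \<in> A (f e)"
    then consider "a = int m - int k + int (f e)" | e' where "e' \<in> S" "f e < f e'" "a = int (g e') - int (f e') + int (f e)"
      unfolding A_def by auto
    then show "int (g e) \<le> a"
    proof cases
      case 1 then show ?thesis using b e by auto
    next
      case 2 then show ?thesis using d e by fastforce
    qed
  qed
  have lower: "R (f e - 1) < int (g e)" if e: "e \<in> S" for e
  proof -
    have "1 \<le> f e" using fb e by auto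
    then have "R (f e - 1) \<le> int (g e) - int (f e) + int (f e - 1)" using Rle2[OF e, of "f e - 1"] by simp
    then show ?thesis using \<open>1 \<le> f e\<close> by simp
  qed
  show ?thesis
  proof (intro exI[of _ "\<lambda>x. nat (R x)"] conjI allI impI ballI)
    fix x show "nat (R x) < nat (R (Suc x))" using Rst[of x] R0[of x] by simp
  next
    show "nat (R k) \<le> m" using Rle[of k] by simp
  next
    fix e assume "e \<in> S"
    then show "nat (R (f e - 1)) < g e" using lower[of e] R0[of "f e - 1"] by (simp add: nat_less_iff)
  next
    fix e assume "e \<in> S"
    then show "g e \<le> nat (R (f e))" using upper[of e] R0[of "f e"] by (simp add: le_nat_iff)
  qed
qed

lemma partial_to_part:
  assumes "has_partial_embedding P k l M m n"
  shows "has_partition_containing P k l M m n"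
proof -
  obtain S \<psi> where pe: "is_partial_embedding S \<psi> P k l M m n"
    using assms unfolding has_partial_embedding_def by auto
  note pe' = pe[unfolded is_partial_embedding_def]
  have ne: "S \<noteq> {}" using pe' by (rule conjunct1)
  have sub: "S \<subseteq> {1..k} \<times> {1..l}" using pe'[THEN conjunct2] by (rule conjunct1)
  have ones: "\<forall>e\<in>{1..k} \<times> {1..l}. P (fst e) (snd e) \<longrightarrow> e \<in> S \<and> M (fst (\<psi> e)) (snd (\<psi> e))"
    using pe'[THEN conjunct2, THEN conjunct2, THEN conjunct2] by (rule conjunct1)
  have bnd: "\<forall>e\<in>S. fst e \<le> fst (\<psi> e) \<and> snd e \<le> snd (\<psi> e) \<and>
             int k - int (fst e) \<le> int m - int (fst (\<psi> e)) \<and>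
             int l - int (snd e) \<le> int n - int (snd (\<psi> e))"
    using pe'[THEN conjunct2, THEN conjunct2, THEN conjunct2, THEN conjunct2] by (rule conjunct1)
  have dif: "\<forall>e1\<in>S. \<forall>e2\<in>S.
        (fst e1 < fst e2 \<longrightarrow>
           int (fst e2) - int (fst e1) \<le> int (fst (\<psi> e2)) - int (fst (\<psi> e1))) \<and>
        (snd e1 < snd e2 \<longrightarrow>
           int (snd e2) - int (snd e1) \<le> int (snd (\<psi> e2)) - int (snd (\<psi> e1)))"
    using pe'[THEN conjunct2, THEN conjunct2, THEN conjunct2, THEN conjunct2] by (rule conjunct2)
  have fin: "finite S" using sub by (rule finite_subset) simp
  have fb1: "\<forall>e\<in>S. 1 \<le> fst e \<and> fst e \<le> k" using sub by auto
  have fb2: "\<forall>e\<in>S. 1 \<le> snd e \<and> snd e \<le> l" using sub by auto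
  have b1: "\<forall>e\<in>S. fst e \<le> fst (\<psi> e) \<and> int k - int (fst e) \<le> int m - int (fst (\<psi> e))" using bnd by blast
  have b2: "\<forall>e\<in>S. snd e \<le> snd (\<psi> e) \<and> int l - int (snd e) \<le> int n - int (snd (\<psi> e))" using bnd by blast
  have d1: "\<forall>e1\<in>S. \<forall>e2\<in>S. fst e1 < fst e2 \<longrightarrow> int (fst e2) - int (fst e1) \<le> int (fst (\<psi> e2)) - int (fst (\<psi> e1))"
    using dif by blast
  have d2: "\<forall>e1\<in>S. \<forall>e2\<in>S. snd e1 < snd e2 \<longrightarrow> int (snd e2) - int (snd e1) \<le> int (snd (\<psi> e2)) - int (snd (\<psi> e1))"
    using dif by blast
  obtain r where r: "\<forall>x<k. r x < r (Suc x)" "r k \<le> m" "\<forall>e\<in>S. r (fst e - 1) < fst (\<psi> e) \<and> fst (\<psi> e) \<le> r (fst e)"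
    using part1d[OF fin ne fb1 b1 d1] by blast
  obtain c where c: "\<forall>x<l. c x < c (Suc x)" "c l \<le> n" "\<forall>e\<in>S. c (snd e - 1) < snd (\<psi> e) \<and> snd (\<psi> e) \<le> c (snd e)"
    using part1d[OF fin ne fb2 b2 d2] by blast
  have H: "\<forall>i\<in>{1..k}. \<forall>j\<in>{1..l}. P i j \<longrightarrow> (\<exists>a\<in>{r (i - 1)<..r i}. \<exists>b\<in>{c (j - 1)<..c j}. M a b)"
  proof (intro ballI impI)
    fix i j assume ij: "i \<in> {1..k}" "j \<in> {1..l}" "P i j"
    then have ijS: "(i,j) \<in> S" and Mij: "M (fst (\<psi> (i,j))) (snd (\<psi> (i,j)))" using ones by auto
    have "fst (\<psi> (i,j)) \<in> {r (i - 1)<..r i}" using r(3) ijS by fastforce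
    moreover have "snd (\<psi> (i,j)) \<in> {c (j - 1)<..c j}" using c(3) ijS by fastforce
    ultimately show "\<exists>a\<in>{r (i - 1)<..r i}. \<exists>b\<in>{c (j - 1)<..c j}. M a b"
      using Mij by blast
  qed
  show ?thesis unfolding has_partition_containing_def
    using r(1,2) c(1,2) H by blast
qed

lemma emb_ord1:
  "is_embedding \<phi> P k l M m n \<Longrightarrow> e1 \<in> {1..k} \<times> {1..l} \<Longrightarrow> e2 \<in> {1..k} \<times> {1..l} \<Longrightarrow>
   fst e1 < fst e2 \<Longrightarrow> fst (\<phi> e1) < fst (\<phi> e2)"
  unfolding is_embedding_def by blast

lemma emb_ord2:
  "is_embedding \<phi> P k l M m n \<Longrightarrow> e1 \<in> {1..k} \<times> {1..l} \<Longrightarrow> e2 \<in> {1..k} \<times> {1..l} \<Longrightarrow>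
   snd e1 < snd e2 \<Longrightarrow> snd (\<phi> e1) < snd (\<phi> e2)"
  unfolding is_embedding_def by blast

lemma emb_range:
  "is_embedding \<phi> P k l M m n \<Longrightarrow> e \<in> {1..k} \<times> {1..l} \<Longrightarrow> \<phi> e \<in> {1..m} \<times> {1..n}"
  unfolding is_embedding_def by blast

lemma gap_row:
  assumes emb: "is_embedding \<phi> P k l M m n" and e: "e \<in> {1..k} \<times> {1..l}" and j: "j \<in> {1..l}"
  shows "fst e < i2 \<Longrightarrow> i2 \<le> k \<Longrightarrow> fst (\<phi> e) + (i2 - fst e) \<le> fst (\<phi> (i2, j))"
proof (induction i2)
  case 0 then show ?case by simp
next
  case (Suc i2)
  have G: "(Suc i2, j) \<in> {1..k} \<times> {1..l}" using Suc.prems j by auto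
  show ?case
  proof (cases "fst e = i2")
    case True
    then show ?thesis using emb_ord1[OF emb e G] by simp
  next
    case False
    then have lt: "fst e < i2" using Suc.prems by simp
    have G2: "(i2, j) \<in> {1..k} \<times> {1..l}" using lt Suc.prems j by auto
    have "fst (\<phi> e) + (i2 - fst e) \<le> fst (\<phi> (i2, j))" using Suc.IH lt Suc.prems by simp
    moreover have "fst (\<phi> (i2, j)) < fst (\<phi> (Suc i2, j))" using emb_ord1[OF emb G2 G] by simp
    ultimately show ?thesis using lt by simp
  qed
qed

lemma gap_col:
  assumes emb: "is_embedding \<phi> P k l M m n" and e: "e \<in> {1..k} \<times> {1..l}" and i: "i \<in> {1..k}"
  shows "snd e < j2 \<Longrightarrow> j2 \<le> l \<Longrightarrow> snd (\<phi> e) + (j2 - snd e) \<le> snd (\<phi> (i, j2))"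
proof (induction j2)
  case 0 then show ?case by simp
next
  case (Suc j2)
  have G: "(i, Suc j2) \<in> {1..k} \<times> {1..l}" using Suc.prems i by auto
  show ?case
  proof (cases "snd e = j2")
    case True
    then show ?thesis using emb_ord2[OF emb e G] by simp
  next
    case False
    then have lt: "snd e < j2" using Suc.prems by simp
    have G2: "(i, j2) \<in> {1..k} \<times> {1..l}" using lt Suc.prems i by auto
    have "snd (\<phi> e) + (j2 - snd e) \<le> snd (\<phi> (i, j2))" using Suc.IH lt Suc.prems by simp
    moreover have "snd (\<phi> (i, j2)) < snd (\<phi> (i, Suc j2))" using emb_ord2[OF emb G2 G] by simp
    ultimately show ?thesis using lt by simp
  qed
qed

lemma emb_to_partial:
  assumes "has_embedding P k l M m n" and kl: "1 \<le> k" "1 \<le> l"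
  shows "has_partial_embedding P k l M m n"
proof -
  obtain \<phi> where emb: "is_embedding \<phi> P k l M m n" using assms unfolding has_embedding_def by auto
  let ?G = "{1..k} \<times> {1..l}"
  have b1: "fst e \<le> fst (\<phi> e)" if e: "e \<in> ?G" for e
  proof (cases "fst e = 1")
    case True then show ?thesis using emb_range[OF emb e] by auto
  next
    case False
    then have "fst (\<phi> (1, snd e)) + (fst e - 1) \<le> fst (\<phi> (fst e, snd e))"
      using gap_row[OF emb _ _, of "(1, snd e)" "snd e" "fst e"] e kl by auto
    moreover have "1 \<le> fst (\<phi> (1, snd e))" using emb_range[OF emb, of "(1, snd e)"] e kl by auto
    ultimately show ?thesis using False e by auto
  qed
  have b2: "snd e \<le> snd (\<phi> e)" if e: "e \<in> ?G" for e
  proof (cases "snd e = 1")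
    case True then show ?thesis using emb_range[OF emb e] by auto
  next
    case False
    then have "snd (\<phi> (fst e, 1)) + (snd e - 1) \<le> snd (\<phi> (fst e, snd e))"
      using gap_col[OF emb _ _, of "(fst e, 1)" "fst e" "snd e"] e kl by auto
    moreover have "1 \<le> snd (\<phi> (fst e, 1))" using emb_range[OF emb, of "(fst e, 1)"] e kl by auto
    ultimately show ?thesis using False e by auto
  qed
  have b3: "int k - int (fst e) \<le> int m - int (fst (\<phi> e))" if e: "e \<in> ?G" for e
  proof (cases "fst e = k")
    case True then show ?thesis using emb_range[OF emb e] by auto
  next
    case False
    then have "fst (\<phi> e) + (k - fst e) \<le> fst (\<phi> (k, snd e))"
      using gap_row[OF emb e, of "snd e" k] e by auto
    moreover have "fst (\<phi> (k, snd e)) \<le> m" using emb_range[OF emb, of "(k, snd e)"] e kl by auto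
    ultimately show ?thesis using False e by auto
  qed
  have b4: "int l - int (snd e) \<le> int n - int (snd (\<phi> e))" if e: "e \<in> ?G" for e
  proof (cases "snd e = l")
    case True then show ?thesis using emb_range[OF emb e] by auto
  next
    case False
    then have "snd (\<phi> e) + (l - snd e) \<le> snd (\<phi> (fst e, l))"
      using gap_col[OF emb e, of "fst e" l] e by auto
    moreover have "snd (\<phi> (fst e, l)) \<le> n" using emb_range[OF emb, of "(fst e, l)"] e kl by auto
    ultimately show ?thesis using False e by auto
  qed
  have d1: "int (fst e2) - int (fst e1) \<le> int (fst (\<phi> e2)) - int (fst (\<phi> e1))"
    if e: "e1 \<in> ?G" "e2 \<in> ?G" "fst e1 < fst e2" for e1 e2
  proof -
    have "fst (\<phi> e1) + (fst e2 - fst e1) \<le> fst (\<phi> (fst e2, snd e2))"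
      using gap_row[OF emb e(1), of "snd e2" "fst e2"] e by auto
    then show ?thesis using e(3) by simp
  qed
  have d2: "int (snd e2) - int (snd e1) \<le> int (snd (\<phi> e2)) - int (snd (\<phi> e1))"
    if e: "e1 \<in> ?G" "e2 \<in> ?G" "snd e1 < snd e2" for e1 e2
  proof -
    have "snd (\<phi> e1) + (snd e2 - snd e1) \<le> snd (\<phi> (fst e2, snd e2))"
      using gap_col[OF emb e(1), of "fst e2" "snd e2"] e by auto
    then show ?thesis using e(3) by simp
  qed
  have c1: "?G \<noteq> {}" using kl by auto
  have c3: "\<forall>e\<in>?G. \<phi> e \<in> {1..m} \<times> {1..n}" using emb_range[OF emb] by blast
  have c4: "\<forall>e\<in>?G. P (fst e) (snd e) \<longrightarrow> e \<in> ?G \<and> M (fst (\<phi> e)) (snd (\<phi> e))"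
    using emb unfolding is_embedding_def by blast
  have c5: "\<forall>e\<in>?G. fst e \<le> fst (\<phi> e) \<and> snd e \<le> snd (\<phi> e) \<and>
             int k - int (fst e) \<le> int m - int (fst (\<phi> e)) \<and>
             int l - int (snd e) \<le> int n - int (snd (\<phi> e))" using b1 b2 b3 b4 by blast
  have c6: "\<forall>e1\<in>?G. \<forall>e2\<in>?G.
        (fst e1 < fst e2 \<longrightarrow>
           int (fst e2) - int (fst e1) \<le> int (fst (\<phi> e2)) - int (fst (\<phi> e1))) \<and>
        (snd e1 < snd e2 \<longrightarrow>
           int (snd e2) - int (snd e1) \<le> int (snd (\<phi> e2)) - int (snd (\<phi> e1)))"
    using d1 d2 by blast
  have "is_partial_embedding ?G \<phi> P k l M m n"
    unfolding is_partial_embedding_def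
    by (intro conjI c1 c3 c4 c5 c6 order_refl)
  then show ?thesis unfolding has_partial_embedding_def by blast
qed



lemma part_to_emb:
  assumes "has_partition_containing P k l M m n"
  shows "has_embedding P k l M m n"
proof -
  obtain r c where r: "\<forall>i<k. r i < r (Suc i)" "r k \<le> m" and c: "\<forall>j<l. c j < c (Suc j)" "c l \<le> n"
    and h: "\<forall>i\<in>{1..k}. \<forall>j\<in>{1..l}. P i j \<longrightarrow> (\<exists>a\<in>{r (i - 1)<..r i}. \<exists>b\<in>{c (j - 1)<..c j}. M a b)"
    using assms unfolding has_partition_containing_def by blast
  define W where "W i j = {p. fst p \<in> {r (i-1)<..r i} \<and> snd p \<in> {c (j-1)<..c j} \<and> M (fst p) (snd p)}" for i j
  define \<phi> where "\<phi> e = (if P (fst e) (snd e) then (SOME p. p \<in> W (fst e) (snd e)) else (r (fst e), c (snd e)))" for e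
  let ?G = "{1..k} \<times> {1..l}"
  have key: "fst (\<phi> e) \<in> {r (fst e - 1)<..r (fst e)} \<and> snd (\<phi> e) \<in> {c (snd e - 1)<..c (snd e)}
     \<and> (P (fst e) (snd e) \<longrightarrow> M (fst (\<phi> e)) (snd (\<phi> e)))" if e: "e \<in> ?G" for e
  proof (cases "P (fst e) (snd e)")
    case True
    then obtain a b where "a \<in> {r (fst e - 1)<..r (fst e)}" "b \<in> {c (snd e - 1)<..c (snd e)}" "M a b"
      using h e by force
    then have "(a,b) \<in> W (fst e) (snd e)" unfolding W_def by simp
    then have "(SOME p. p \<in> W (fst e) (snd e)) \<in> W (fst e) (snd e)" by (rule someI)
    then show ?thesis using True unfolding \<phi>_def W_def by simp
  next
    case False
    obtain u where u: "fst e = Suc u" using e by (cases "fst e") auto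
    obtain v where v: "snd e = Suc v" using e by (cases "snd e") auto
    have "r u < r (Suc u)" using r(1) e u by auto
    moreover have "c v < c (Suc v)" using c(1) e v by auto
    ultimately have "r (fst e - 1) < r (fst e)" "c (snd e - 1) < c (snd e)" using u v by simp_all
    then show ?thesis using False unfolding \<phi>_def by simp
  qed
  have "is_embedding \<phi> P k l M m n"
    unfolding is_embedding_def
  proof (intro conjI ballI impI)
    fix e assume e: "e \<in> ?G"
    have "r (fst e) \<le> r k" "c (snd e) \<le> c l"
      using strict_mono_le[OF r(1)] strict_mono_le[OF c(1)] e by auto
    then show "\<phi> e \<in> {1..m} \<times> {1..n}" using key[OF e] r(2) c(2)
      by (cases "\<phi> e") auto
  next
    fix e assume "e \<in> ?G" "P (fst e) (snd e)"
    then show "M (fst (\<phi> e)) (snd (\<phi> e))" using key by blast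
  next
    fix e1 e2 assume e: "e1 \<in> ?G" "e2 \<in> ?G" "fst e1 < fst e2"
    have "r (fst e1) \<le> r (fst e2 - 1)" using strict_mono_le[OF r(1)] e by auto
    then show "fst (\<phi> e1) < fst (\<phi> e2)" using key[OF e(1)] key[OF e(2)] by auto
  next
    fix e1 e2 assume e: "e1 \<in> ?G" "e2 \<in> ?G" "snd e1 < snd e2"
    have "c (snd e1) \<le> c (snd e2 - 1)" using strict_mono_le[OF c(1)] e by auto
    then show "snd (\<phi> e1) < snd (\<phi> e2)" using key[OF e(1)] key[OF e(2)] by auto
  qed
  then show ?thesis unfolding has_embedding_def by blast
qed

lemma im_to_part:
  assumes "interval_minor P k l M m n"
  shows "has_partition_containing P k l M m n"
proof -
  obtain M' where reach: "contract_step\<^sup>*\<^sup>* (m, n, M) (k, l, M')" and dom: "dominates k l M' P"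
    using assms unfolding interval_minor_def by blast
  obtain r c where rc: "\<forall>x<k. r x < r (Suc x)" "r k = m" "\<forall>y<l. c y < c (Suc y)" "c l = n"
     "\<forall>i\<in>{1..k}. \<forall>j\<in>{1..l}. M' i j = blk r c M i j"
    using IMinv[OF reach] by auto
  show ?thesis unfolding has_partition_containing_def
    using rc dom unfolding dominates_def blk_def
    by (intro exI[of _ r] exI[of _ c]) auto
qed

lemma normalize:
  assumes st: "\<forall>x<k. (r::nat\<Rightarrow>nat) x < r (Suc x)" and rk: "r k \<le> m" and k: "1 \<le> k" and m: "1 \<le> m"
  shows "\<forall>x<k. (\<lambda>x. if x = 0 then 0 else if x = k then m else r x) x < (\<lambda>x. if x = 0 then 0 else if x = k then m else r x) (Suc x)"
proof (intro allI impI)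
  fix x assume x: "x < k"
  show "(\<lambda>x. if x = 0 then 0 else if x = k then m else r x) x < (\<lambda>x. if x = 0 then 0 else if x = k then m else r x) (Suc x)"
  proof (cases "Suc x = k")
    case True
    have "x \<noteq> 0 \<Longrightarrow> r x < r k" using st True by auto
    then show ?thesis using True rk m by auto
  next
    case False
    have "r x < r (Suc x)" using st x by simp
    then show ?thesis using False x by auto
  qed
qed

lemma part_to_im:
  assumes "has_partition_containing P k l M m n" and kl: "1 \<le> k" "1 \<le> l" "1 \<le> m" "1 \<le> n"
  shows "interval_minor P k l M m n"
proof -
  obtain r c where r: "\<forall>i<k. r i < r (Suc i)" "r k \<le> m" and c: "\<forall>j<l. c j < c (Suc j)" "c l \<le> n"
    and h: "\<forall>i\<in>{1..k}. \<forall>j\<in>{1..l}. P i j \<longrightarrow> (\<exists>a\<in>{r (i - 1)<..r i}. \<exists>b\<in>{c (j - 1)<..c j}. M a b)"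
    using assms unfolding has_partition_containing_def by blast
  define r0 where "r0 = (\<lambda>x. if x = 0 then 0 else if x = k then m else r x)"
  define c0 where "c0 = (\<lambda>x. if x = 0 then 0 else if x = l then n else c x)"
  have sr: "\<forall>x<k. r0 x < r0 (Suc x)" unfolding r0_def by (rule normalize[OF r kl(1,3)])
  have sc: "\<forall>x<l. c0 x < c0 (Suc x)" unfolding c0_def by (rule normalize[OF c kl(2,4)])
  obtain M' where M': "contract_step\<^sup>*\<^sup>* (m,n,M) (k,l,M')" "\<forall>i\<in>{1..k}. \<forall>j\<in>{1..l}. M' i j = blk r0 c0 M i j"
    using PI[OF sr _ _ sc, of m n M] kl unfolding r0_def c0_def by auto
  have "dominates k l M' P" unfolding dominates_def
  proof (intro ballI impI)
    fix i j assume ij: "i \<in> {1..k}" "j \<in> {1..l}" "P i j"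
    then obtain a b where ab: "a \<in> {r (i - 1)<..r i}" "b \<in> {c (j - 1)<..c j}" "M a b" using h by blast
    have "r0 (i-1) \<le> r (i-1)" "r i \<le> r0 i" "c0 (j-1) \<le> c (j-1)" "c j \<le> c0 j"
      using ij r(2) c(2) unfolding r0_def c0_def by auto
    then have "blk r0 c0 M i j" unfolding blk_def using ab by force
    then show "M' i j" using M'(2) ij by auto
  qed
  then show ?thesis unfolding interval_minor_def using M'(1) by blast
qed

theorem lemma2p1:
  fixes P M :: bmat and k l m n :: nat
  assumes "1 \<le> k" and "1 \<le> l" and "1 \<le> m" and "1 \<le> n"
  shows "(interval_minor P k l M m n \<longleftrightarrow> has_partition_containing P k l M m n)
       \<and> (has_partition_containing P k l M m n \<longleftrightarrow> has_embedding P k l M m n)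
       \<and> (has_embedding P k l M m n \<longleftrightarrow> has_partial_embedding P k l M m n)"
proof -
  have 1: "interval_minor P k l M m n \<Longrightarrow> has_partition_containing P k l M m n" by (rule im_to_part)
  have 2: "has_partition_containing P k l M m n \<Longrightarrow> interval_minor P k l M m n" by (rule part_to_im[OF _ assms])
  have 3: "has_partition_containing P k l M m n \<Longrightarrow> has_embedding P k l M m n" by (rule part_to_emb)
  have 4: "has_embedding P k l M m n \<Longrightarrow> has_partial_embedding P k l M m n" by (rule emb_to_partial[OF _ assms(1,2)])
  have 5: "has_partial_embedding P k l M m n \<Longrightarrow> has_partition_containing P k l M m n" by (rule partial_to_part)
  show ?thesis using 1 2 3 4 5 by blast
qed


end
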